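(* Let $K_n$ be the complete graph on $n$ vertices and $M_k$ a matching of $K_n$ with $k$ edges, and let $K_n\setminus M_k$ be the graph obtained by deleting the edges of $M_k$. Then $K(K_n\setminus M_k)\cong \mathbb{Z}_n^{\,n-2k-2}\oplus \mathbb{Z}_{n(n-2)}^{\,k}$ if $n\ge 2k+2$, and $K(K_n\setminus M_k)\cong \mathbb{Z}_{n-2}\oplus\mathbb{Z}_{n(n-2)}^{\,k-1}$ if $n=2k+1$.
   Context: For a connected graph $G$, the Laplacian matrix $L(G)$ has $(u,u)$-entry the degree of $u$ and $(u,v)$-entry $-m_{uv}$ (minus the number of edges between $u$ and $v$) for $u\ne v$. For a vertex $s$, $L(G,s)$ is $L(G)$ with row and column $s$ deleted, and the critical group is $K(G)=\mathbb{Z}^{V(G)\setminus s}/\mathrm{Im}\,L(G,s)$ (independent of $s$ up to isomorphism). $\mathbb{Z}_d^{\,r}$ denotes the direct sum of $r$ copies of $\mathbb{Z}/d\mathbb{Z}$. *)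

theory Defs
  imports "HOL-Algebra.Product_Groups" "HOL-Algebra.Elementary_Groups"
begin

text \<open>Laplacian of a (multi)graph on a finite vertex set V with edge multiplicity
  function m (m u v = number of edges between u and v, for u \<noteq> v).\<close>
definition laplacian :: "'a set \<Rightarrow> ('a \<Rightarrow> 'a \<Rightarrow> nat) \<Rightarrow> 'a \<Rightarrow> 'a \<Rightarrow> int" where
  "laplacian V m u v =
     (if u = v then int (\<Sum>w\<in>V - {u}. m u w) else - int (m u v))"

definition lattice_group :: "'a set \<Rightarrow> 'a \<Rightarrow> ('a \<Rightarrow> int) monoid" where
  "lattice_group V s = product_group (V - {s}) (\<lambda>_. integer_group)"

definition reduced_laplacian_map :: "'a set \<Rightarrow> ('a \<Rightarrow> 'a \<Rightarrow> nat) \<Rightarrow> 'a \<Rightarrow> ('a \<Rightarrow> int) \<Rightarrow> ('a \<Rightarrow> int)" where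
  "reduced_laplacian_map V m s x = (\<lambda>u\<in>V - {s}. \<Sum>v\<in>V - {s}. laplacian V m u v * x v)"

definition critical_group :: "'a set \<Rightarrow> ('a \<Rightarrow> 'a \<Rightarrow> nat) \<Rightarrow> 'a \<Rightarrow> ('a \<Rightarrow> int) set monoid" where
  "critical_group V m s =
     lattice_group V s Mod (reduced_laplacian_map V m s ` carrier (lattice_group V s))"

definition is_matching :: "nat \<Rightarrow> nat set set \<Rightarrow> bool" where
  "is_matching n M \<longleftrightarrow>
     (\<forall>e\<in>M. e \<subseteq> {0..<n} \<and> card e = 2) \<and>
     (\<forall>e\<in>M. \<forall>f\<in>M. e \<noteq> f \<longrightarrow> e \<inter> f = {})"

definition complete_minus_matching :: "nat set set \<Rightarrow> nat \<Rightarrow> nat \<Rightarrow> nat" where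
  "complete_minus_matching M u v = (if u \<noteq> v \<and> {u, v} \<notin> M then 1 else 0)"

definition cyclic_sum :: "nat \<Rightarrow> nat \<Rightarrow> nat \<Rightarrow> nat \<Rightarrow> (nat \<Rightarrow> int) monoid" where
  "cyclic_sum d1 r1 d2 r2 =
     product_group {..<r1 + r2}
       (\<lambda>i. if i < r1 then integer_mod_group d1 else integer_mod_group d2)"

end

theory Submission
  imports Defs
begin

lemma lap_sym: "(\<And>u v. m u v = m v u) \<Longrightarrow> laplacian V m u v = laplacian V m v u"
  by (auto simp: laplacian_def)

lemma row_sum:
  assumes "finite V" "u \<in> V"
  shows "(\<Sum>v\<in>V. laplacian V m u v) = 0"
proof -
  have "(\<Sum>v\<in>V. laplacian V m u v) = laplacian V m u u + (\<Sum>v\<in>V-{u}. laplacian V m u v)"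
    using assms by (simp add: sum.remove)
  also have "(\<Sum>v\<in>V-{u}. laplacian V m u v) = (\<Sum>v\<in>V-{u}. - int (m u v))"
    by (rule sum.cong) (auto simp: laplacian_def)
  finally show ?thesis by (simp add: laplacian_def sum_negf)
qed

lemma Lf_sum_zero:
  assumes "finite V" and sym: "\<And>u v. m u v = m v u"
  shows "(\<Sum>u\<in>V. \<Sum>v\<in>V. laplacian V m u v * y v) = 0"
proof -
  have "(\<Sum>u\<in>V. \<Sum>v\<in>V. laplacian V m u v * y v) = (\<Sum>v\<in>V. (\<Sum>u\<in>V. laplacian V m v u) * y v)"
    by (subst sum.swap) (simp add: sum_distrib_right lap_sym[OF sym])
  also have "\<dots> = 0" using assms(1) row_sum[OF assms(1)] by (intro sum.neutral) auto
  finally show ?thesis .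
qed

lemma Lf_shift:
  assumes "finite V" "u \<in> V"
  shows "(\<Sum>v\<in>V. laplacian V m u v * (y v - c)) = (\<Sum>v\<in>V. laplacian V m u v * y v)"
proof -
  have "(\<Sum>v\<in>V. laplacian V m u v * (y v - c)) = (\<Sum>v\<in>V. laplacian V m u v * y v) - (\<Sum>v\<in>V. laplacian V m u v) * c"
    by (simp add: algebra_simps sum_subtractf sum_distrib_right sum_distrib_left)
  then show ?thesis using row_sum[OF assms] by simp
qed

lemma crit_iso_generic:
  fixes V :: "'a set" and m s and H :: "('b,'c) monoid_scheme" and \<psi> :: "('a \<Rightarrow> int) \<Rightarrow> 'b"
  assumes fin: "finite V" and sV: "s \<in> V" and sym: "\<And>u v. m u v = m v u" and grpH: "group H"
    and congV: "\<And>x x'. (\<And>v. v \<in> V \<Longrightarrow> x v = x' v) \<Longrightarrow> \<psi> x = \<psi> x'"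
    and carr: "\<And>x. \<psi> x \<in> carrier H"
    and add: "\<And>x x'. \<psi> (\<lambda>v. x v + x' v) = \<psi> x \<otimes>\<^bsub>H\<^esub> \<psi> x'"
    and surj: "\<And>h. h \<in> carrier H \<Longrightarrow> \<exists>x. sum x V = 0 \<and> \<psi> x = h"
    and ker: "\<And>x. sum x V = 0 \<Longrightarrow> (\<psi> x = \<one>\<^bsub>H\<^esub> \<longleftrightarrow> (\<exists>y. \<forall>u\<in>V. x u = (\<Sum>v\<in>V. laplacian V m u v * y v)))"
  shows "critical_group V m s \<cong> H"
proof -
  define G where "G = lattice_group V s"
  define hat where "hat x = (\<lambda>v. if v = s then - (\<Sum>w\<in>V-{s}. x w) else x v)" for x :: "'a \<Rightarrow> int"
  define \<phi> where "\<phi> x = \<psi> (hat x)" for x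
  have grpG: "group G" unfolding G_def lattice_group_def by simp
  have cG: "carrier G = (\<Pi>\<^sub>E i\<in>V-{s}. UNIV)" unfolding G_def lattice_group_def by simp
  have hat_sum: "sum (hat x) V = 0" for x
  proof -
    have "sum (hat x) V = hat x s + sum (hat x) (V-{s})" using fin sV by (simp add: sum.remove)
    also have "sum (hat x) (V-{s}) = sum x (V-{s})" by (rule sum.cong) (auto simp: hat_def)
    finally show ?thesis by (simp add: hat_def)
  qed
  have hom: "\<phi> \<in> hom G H"
  proof (rule homI)
    fix x assume "x \<in> carrier G" then show "\<phi> x \<in> carrier H" using carr \<phi>_def by simp
  next
    fix x y assume xy: "x \<in> carrier G" "y \<in> carrier G"
    have "\<phi> (x \<otimes>\<^bsub>G\<^esub> y) = \<psi> (\<lambda>v. hat x v + hat y v)"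
      unfolding \<phi>_def
    proof (rule congV)
      fix v assume v: "v \<in> V"
      show "hat (x \<otimes>\<^bsub>G\<^esub> y) v = hat x v + hat y v"
        using v by (auto simp: hat_def G_def lattice_group_def sum.distrib)
    qed
    then show "\<phi> (x \<otimes>\<^bsub>G\<^esub> y) = \<phi> x \<otimes>\<^bsub>H\<^esub> \<phi> y" by (simp add: add \<phi>_def)
  qed
  interpret gh: group_hom G H \<phi>
    using grpG grpH hom by (simp add: group_hom_def group_hom_axioms_def)
  have img: "\<phi> ` carrier G = carrier H"
  proof
    show "\<phi> ` carrier G \<subseteq> carrier H" using carr \<phi>_def by auto
  next
    show "carrier H \<subseteq> \<phi> ` carrier G"
    proof
      fix h assume "h \<in> carrier H"
      then obtain x where x: "sum x V = 0" "\<psi> x = h" using surj by blast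
      define z where "z = restrict x (V-{s})"
      have zc: "z \<in> carrier G" unfolding cG z_def by simp
      have "\<phi> z = \<psi> x"
        unfolding \<phi>_def
      proof (rule congV)
        fix v assume v: "v \<in> V"
        have "sum x V = x s + sum x (V-{s})" using fin sV by (simp add: sum.remove)
        moreover have "sum z (V-{s}) = sum x (V-{s})" unfolding z_def by simp
        ultimately show "hat z v = x v" using v x(1) by (auto simp: hat_def z_def)
      qed
      then show "h \<in> \<phi> ` carrier G" using zc x(2) by (metis image_eqI)
    qed
  qed
  define Lf where "Lf y u = (\<Sum>v\<in>V. laplacian V m u v * y v)" for y u
  have kereq: "kernel G H \<phi> = reduced_laplacian_map V m s ` carrier G"
  proof
    show "kernel G H \<phi> \<subseteq> reduced_laplacian_map V m s ` carrier G"
    proof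
      fix x assume "x \<in> kernel G H \<phi>"
      then have xc: "x \<in> carrier G" and x1: "\<psi> (hat x) = \<one>\<^bsub>H\<^esub>" by (auto simp: kernel_def \<phi>_def)
      then obtain y where y: "\<forall>u\<in>V. hat x u = Lf y u" using ker[OF hat_sum] Lf_def by auto
      define z where "z = (\<lambda>v\<in>V-{s}. y v - y s)"
      have zc: "z \<in> carrier G" unfolding cG z_def by simp
      have "x = reduced_laplacian_map V m s z"
      proof (rule extensionalityI[where A="V-{s}"])
        show "x \<in> extensional (V-{s})" using xc cG by (simp add: PiE_def)
        show "reduced_laplacian_map V m s z \<in> extensional (V-{s})"
          by (simp add: reduced_laplacian_map_def)
        fix u assume u: "u \<in> V-{s}"
        have "reduced_laplacian_map V m s z u = (\<Sum>v\<in>V-{s}. laplacian V m u v * (y v - y s))"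
          using u by (simp add: reduced_laplacian_map_def z_def)
        also have "\<dots> = (\<Sum>v\<in>V. laplacian V m u v * (y v - y s))"
          using fin sV by (simp add: sum.remove)
        also have "\<dots> = Lf y u" unfolding Lf_def using fin u by (intro Lf_shift) auto
        also have "\<dots> = hat x u" using y u by auto
        also have "\<dots> = x u" using u by (simp add: hat_def)
        finally show "x u = reduced_laplacian_map V m s z u" by simp
      qed
      then show "x \<in> reduced_laplacian_map V m s ` carrier G" using zc by blast
    qed
  next
    show "reduced_laplacian_map V m s ` carrier G \<subseteq> kernel G H \<phi>"
    proof
      fix x assume "x \<in> reduced_laplacian_map V m s ` carrier G"
      then obtain z where zc: "z \<in> carrier G" and xz: "x = reduced_laplacian_map V m s z" by blast
      have xc: "x \<in> carrier G" unfolding xz cG by (simp add: reduced_laplacian_map_def)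
      define y where "y v = (if v = s then 0 else z v)" for v
      have a: "x u = Lf y u" if u: "u \<in> V-{s}" for u
      proof -
        have "x u = (\<Sum>v\<in>V-{s}. laplacian V m u v * y v)"
          using u by (simp add: xz reduced_laplacian_map_def y_def)
        also have "\<dots> = Lf y u" unfolding Lf_def using fin sV by (simp add: sum.remove y_def)
        finally show ?thesis .
      qed
      have "\<forall>u\<in>V. hat x u = Lf y u"
      proof
        fix u assume u: "u \<in> V"
        show "hat x u = Lf y u"
        proof (cases "u = s")
          case True
          have "sum (Lf y) V = 0" unfolding Lf_def using Lf_sum_zero[OF fin sym] .
          then have "Lf y s + sum (Lf y) (V-{s}) = 0" using fin sV by (simp add: sum.remove)
          moreover have "sum (Lf y) (V-{s}) = sum x (V-{s})" using a by (intro sum.cong) auto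
          ultimately show ?thesis using True by (simp add: hat_def)
        next
          case False then show ?thesis using a u by (simp add: hat_def)
        qed
      qed
      then have "\<psi> (hat x) = \<one>\<^bsub>H\<^esub>" using ker[OF hat_sum] Lf_def by auto
      then show "x \<in> kernel G H \<phi>" using xc by (simp add: kernel_def \<phi>_def)
    qed
  qed
  have "G Mod kernel G H \<phi> \<cong> H" using gh.FactGroup_iso[OF img] .
  then show ?thesis unfolding critical_group_def G_def[symmetric] kereq .
qed



lemma lap_formula:
  assumes fin: "finite V" and u: "u \<in> V" and P: "P \<subseteq> V - {u}"
    and mu: "\<And>v. v \<in> V \<Longrightarrow> m u v = (if v \<noteq> u \<and> v \<notin> P then 1 else 0)"
  shows "(\<Sum>v\<in>V. laplacian V m u v * y v) = int (card V) * y u - sum y V - (\<Sum>v\<in>P. y u - y v)"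
proof -
  have finP: "finite P" using P fin finite_subset by blast
  have d1: "(\<Sum>w\<in>V-{u}. m u w) = card (V - {u} - P)"
  proof -
    have "(\<Sum>w\<in>V-{u}. m u w) = (\<Sum>w\<in>V-{u}-P. m u w) + (\<Sum>w\<in>P. m u w)"
      using P fin by (intro sum.subset_diff) auto
    also have "(\<Sum>w\<in>P. m u w) = 0" using P mu by (intro sum.neutral) auto
    also have "(\<Sum>w\<in>V-{u}-P. m u w) = (\<Sum>w\<in>V-{u}-P. 1)" using mu by (intro sum.cong) auto
    finally show ?thesis by simp
  qed
  have cd: "int (card (V - {u} - P)) = int (card V) - 1 - int (card P)"
  proof -
    have "card (V - {u} - P) = card (V - {u}) - card P" using P finP by (simp add: card_Diff_subset)
    moreover have "card (V - {u}) = card V - 1" using u fin by simp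
    moreover have "card P \<le> card (V - {u})" using P fin by (intro card_mono) auto
    moreover have "card V \<ge> 1" using u fin by (metis One_nat_def Suc_leI card_gt_0_iff empty_iff)
    ultimately show ?thesis by linarith
  qed
  have s2: "(\<Sum>v\<in>V-{u}. int (m u v) * y v) = sum y V - y u - sum y P"
  proof -
    have "(\<Sum>v\<in>V-{u}. int (m u v) * y v) = (\<Sum>v\<in>V-{u}-P. int (m u v) * y v) + (\<Sum>v\<in>P. int (m u v) * y v)"
      using P fin by (intro sum.subset_diff) auto
    also have "(\<Sum>v\<in>P. int (m u v) * y v) = 0" using P mu by (intro sum.neutral) auto
    also have "(\<Sum>v\<in>V-{u}-P. int (m u v) * y v) = (\<Sum>v\<in>V-{u}-P. y v)" using mu by (intro sum.cong) auto
    also have "(\<Sum>v\<in>V-{u}-P. y v) = sum y (V - {u}) - sum y P"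
      using P fin by (simp add: sum_diff)
    also have "sum y (V - {u}) = sum y V - y u" using fin u by (simp add: sum_diff1)
    finally show ?thesis by simp
  qed
  have "(\<Sum>v\<in>V. laplacian V m u v * y v) = laplacian V m u u * y u + (\<Sum>v\<in>V-{u}. laplacian V m u v * y v)"
    using fin u by (simp add: sum.remove)
  also have "(\<Sum>v\<in>V-{u}. laplacian V m u v * y v) = - (\<Sum>v\<in>V-{u}. int (m u v) * y v)"
    by (simp add: sum_negf[symmetric]) (rule sum.cong, auto simp: laplacian_def)
  also have "laplacian V m u u = int (card V) - 1 - int (card P)"
    using d1 cd by (simp add: laplacian_def)
  finally have e: "(\<Sum>v\<in>V. laplacian V m u v * y v) = (int (card V) - 1 - int (card P)) * y u - (\<Sum>v\<in>V-{u}. int (m u v) * y v)" by simp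
  have "(\<Sum>v\<in>P. y u - y v) = int (card P) * y u - sum y P"
    by (simp add: sum_subtractf)
  then show ?thesis using s2 e by (simp add: algebra_simps)
qed

lemma cmm_sym: "complete_minus_matching M u v = complete_minus_matching M v u"
  by (simp add: complete_minus_matching_def insert_commute)

locale KM =
  fixes n k r :: nat and ue a b :: "nat \<Rightarrow> nat"
  assumes nrk: "n = r + 2*k" and r1: "1 \<le> r"
    and ue_inj: "inj_on ue {..<r}" and a_inj: "inj_on a {..<k}" and b_inj: "inj_on b {..<k}"
    and ue_lt: "\<And>j. j < r \<Longrightarrow> ue j < n" and a_lt: "\<And>i. i < k \<Longrightarrow> a i < n"
    and b_lt: "\<And>i. i < k \<Longrightarrow> b i < n"
    and ue_a: "\<And>j i. j < r \<Longrightarrow> i < k \<Longrightarrow> ue j \<noteq> a i"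
    and ue_b: "\<And>j i. j < r \<Longrightarrow> i < k \<Longrightarrow> ue j \<noteq> b i"
    and a_b: "\<And>i i'. i < k \<Longrightarrow> i' < k \<Longrightarrow> a i \<noteq> b i'"
begin

definition Ms where "Ms = (\<lambda>i. {a i, b i}) ` {..<k}"
definition mm where "mm = complete_minus_matching Ms"
definition Lf where "Lf y u = (\<Sum>v\<in>{0..<n}. laplacian {0..<n} mm u v * y v)"

lemma ue_eq: "j < r \<Longrightarrow> j' < r \<Longrightarrow> ue j = ue j' \<longleftrightarrow> j = j'"
  using ue_inj by (auto dest: inj_onD)
lemma a_eq: "i < k \<Longrightarrow> i' < k \<Longrightarrow> a i = a i' \<longleftrightarrow> i = i'"
  using a_inj by (auto dest: inj_onD)
lemma b_eq: "i < k \<Longrightarrow> i' < k \<Longrightarrow> b i = b i' \<longleftrightarrow> i = i'"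
  using b_inj by (auto dest: inj_onD)

lemma b_a: "i < k \<Longrightarrow> i' < k \<Longrightarrow> b i \<noteq> a i'" using a_b by metis
lemma b_ue: "j < r \<Longrightarrow> i < k \<Longrightarrow> b i \<noteq> ue j" using ue_b by metis
lemma a_ue: "j < r \<Longrightarrow> i < k \<Longrightarrow> a i \<noteq> ue j" using ue_a by metis

lemma V_eq: "{0..<n} = ue ` {..<r} \<union> a ` {..<k} \<union> b ` {..<k}"
proof -
  have sub: "ue ` {..<r} \<union> a ` {..<k} \<union> b ` {..<k} \<subseteq> {0..<n}"
    using ue_lt a_lt b_lt by auto
  have d1: "ue ` {..<r} \<inter> a ` {..<k} = {}" using ue_a by auto
  have d2: "(ue ` {..<r} \<union> a ` {..<k}) \<inter> b ` {..<k} = {}" using b_ue b_a by auto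
  have "card (ue ` {..<r} \<union> a ` {..<k} \<union> b ` {..<k}) = r + k + k"
    using d1 d2 ue_inj a_inj b_inj by (simp add: card_Un_disjoint card_image)
  then have "card (ue ` {..<r} \<union> a ` {..<k} \<union> b ` {..<k}) = card {0..<n}" using nrk by simp
  then show ?thesis using sub by (intro card_subset_eq[symmetric]) auto
qed

lemma V_cases:
  assumes "u < n"
  obtains j where "j < r" "u = ue j" | i where "i < k" "u = a i" | i where "i < k" "u = b i"
proof -
  have "u \<in> ue ` {..<r} \<union> a ` {..<k} \<union> b ` {..<k}" using assms V_eq by auto
  then consider "u \<in> ue ` {..<r}" | "u \<in> a ` {..<k}" | "u \<in> b ` {..<k}" by blast
  then show ?thesis
  proof cases
    case 1 then obtain j where "j < r" "u = ue j" by auto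
    then show ?thesis using that(1) by simp
  next
    case 2 then obtain i where "i < k" "u = a i" by auto
    then show ?thesis using that(2) by simp
  next
    case 3 then obtain i where "i < k" "u = b i" by auto
    then show ?thesis using that(3) by simp
  qed
qed

lemma sum_V: "sum f {0..<n} = (\<Sum>j<r. f (ue j)) + (\<Sum>i<k. f (a i)) + (\<Sum>i<k. f (b i))"
proof -
  have d1: "ue ` {..<r} \<inter> a ` {..<k} = {}" using ue_a by auto
  have d2: "(ue ` {..<r} \<union> a ` {..<k}) \<inter> b ` {..<k} = {}" using b_ue b_a by auto
  have "sum f {0..<n} = sum f (ue ` {..<r}) + sum f (a ` {..<k}) + sum f (b ` {..<k})"
    unfolding V_eq using d1 d2 by (simp add: sum.union_disjoint)
  then show ?thesis using ue_inj a_inj b_inj by (simp add: sum.reindex)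
qed

lemma mm_sym: "mm u v = mm v u" unfolding mm_def by (rule cmm_sym)

lemma mem_Ms_ue: "j < r \<Longrightarrow> {ue j, v} \<notin> Ms"
proof
  assume j: "j < r" and "{ue j, v} \<in> Ms"
  then obtain i where i: "i < k" "{ue j, v} = {a i, b i}" by (auto simp: Ms_def)
  then have "ue j = a i \<or> ue j = b i" by (auto simp: doubleton_eq_iff)
  then show False using ue_a ue_b i j by blast
qed

lemma mem_Ms_a: "i < k \<Longrightarrow> {a i, v} \<in> Ms \<longleftrightarrow> v = b i"
proof
  assume i: "i < k" and "{a i, v} \<in> Ms"
  then obtain i' where i': "i' < k" "{a i, v} = {a i', b i'}" by (auto simp: Ms_def)
  then have "(a i = a i' \<and> v = b i') \<or> (a i = b i' \<and> v = a i')" by (auto simp: doubleton_eq_iff)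
  then show "v = b i" using a_b a_eq i i' by metis
next
  assume "i < k" "v = b i" then show "{a i, v} \<in> Ms" by (auto simp: Ms_def)
qed

lemma mem_Ms_b: "i < k \<Longrightarrow> {b i, v} \<in> Ms \<longleftrightarrow> v = a i"
proof
  assume i: "i < k" and "{b i, v} \<in> Ms"
  then obtain i' where i': "i' < k" "{b i, v} = {a i', b i'}" by (auto simp: Ms_def)
  then have "(b i = a i' \<and> v = b i') \<or> (b i = b i' \<and> v = a i')" by (auto simp: doubleton_eq_iff)
  then show "v = a i" using b_a b_eq i i' by metis
next
  assume "i < k" "v = a i" then show "{b i, v} \<in> Ms" by (auto simp: Ms_def insert_commute)
qed

lemma mm_ue: "j < r \<Longrightarrow> mm (ue j) v = (if v \<noteq> ue j \<and> v \<notin> {} then 1 else 0)"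
  using mem_Ms_ue by (simp add: mm_def complete_minus_matching_def)

lemma mm_a: "i < k \<Longrightarrow> mm (a i) v = (if v \<noteq> a i \<and> v \<notin> {b i} then 1 else 0)"
  using mem_Ms_a by (auto simp: mm_def complete_minus_matching_def)

lemma mm_b: "i < k \<Longrightarrow> mm (b i) v = (if v \<noteq> b i \<and> v \<notin> {a i} then 1 else 0)"
  using mem_Ms_b by (auto simp: mm_def complete_minus_matching_def)

lemma Lf_ue: "j < r \<Longrightarrow> Lf y (ue j) = int n * y (ue j) - sum y {0..<n}"
proof -
  assume j: "j < r"
  have "Lf y (ue j) = int (card {0..<n}) * y (ue j) - sum y {0..<n} - (\<Sum>v\<in>{}. y (ue j) - y v)"
    unfolding Lf_def
  proof (rule lap_formula)
    show "ue j \<in> {0..<n}" using ue_lt[OF j] by simp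
    show "\<And>v. v \<in> {0..<n} \<Longrightarrow> mm (ue j) v = (if v \<noteq> ue j \<and> v \<notin> {} then 1 else 0)"
      using mm_ue[OF j] by blast
  qed auto
  then show ?thesis by simp
qed

lemma Lf_a: "i < k \<Longrightarrow> Lf y (a i) = int n * y (a i) - sum y {0..<n} - (y (a i) - y (b i))"
proof -
  assume i: "i < k"
  have "Lf y (a i) = int (card {0..<n}) * y (a i) - sum y {0..<n} - (\<Sum>v\<in>{b i}. y (a i) - y v)"
    unfolding Lf_def
  proof (rule lap_formula)
    show "a i \<in> {0..<n}" using a_lt[OF i] by simp
    show "{b i} \<subseteq> {0..<n} - {a i}" using b_lt[OF i] a_b[OF i i] by auto
    show "\<And>v. v \<in> {0..<n} \<Longrightarrow> mm (a i) v = (if v \<noteq> a i \<and> v \<notin> {b i} then 1 else 0)"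
      using mm_a[OF i] by blast
  qed auto
  then show ?thesis by simp
qed

lemma Lf_b: "i < k \<Longrightarrow> Lf y (b i) = int n * y (b i) - sum y {0..<n} - (y (b i) - y (a i))"
proof -
  assume i: "i < k"
  have "Lf y (b i) = int (card {0..<n}) * y (b i) - sum y {0..<n} - (\<Sum>v\<in>{a i}. y (b i) - y v)"
    unfolding Lf_def
  proof (rule lap_formula)
    show "b i \<in> {0..<n}" using b_lt[OF i] by simp
    show "{a i} \<subseteq> {0..<n} - {b i}" using a_lt[OF i] a_b[OF i i] by auto
    show "\<And>v. v \<in> {0..<n} \<Longrightarrow> mm (b i) v = (if v \<noteq> b i \<and> v \<notin> {a i} then 1 else 0)"
      using mm_b[OF i] by blast
  qed auto
  then show ?thesis by simp
qed

end


context KM begin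

definition NN where "NN = int n * (int n - 2)"

lemma NN_nz: "i < k \<Longrightarrow> NN \<noteq> 0"
proof -
  assume "i < k"
  then have "n \<ge> 3" using nrk r1 by simp
  then show ?thesis unfolding NN_def by simp
qed

lemma ker_char:
  assumes sx: "sum x {0..<n} = 0"
  shows "(\<exists>y. \<forall>u\<in>{0..<n}. x u = Lf y u) \<longleftrightarrow>
    ((\<forall>j<r. int n dvd x (ue j) - x (ue (r-1))) \<and>
     (\<forall>i<k. NN dvd (int n - 1) * (x (b i) - x (ue (r-1))) - (x (a i) - x (ue (r-1)))))"
    (is "?L \<longleftrightarrow> ?R")
proof
  assume ?L
  then obtain y where y: "\<And>u. u < n \<Longrightarrow> x u = Lf y u" by auto
  define S where "S = sum y {0..<n}"
  have r0: "r - 1 < r" using r1 by simp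
  have x0: "x (ue (r-1)) = int n * y (ue (r-1)) - S"
    using y[OF ue_lt[OF r0]] Lf_ue[OF r0] S_def by simp
  show ?R
  proof (intro conjI allI impI)
    fix j assume j: "j < r"
    have "x (ue j) - x (ue (r-1)) = int n * (y (ue j) - y (ue (r-1)))"
      using y[OF ue_lt[OF j]] Lf_ue[OF j] x0 S_def by (simp add: algebra_simps)
    then show "int n dvd x (ue j) - x (ue (r-1))" by simp
  next
    fix i assume i: "i < k"
    have xa: "x (a i) = int n * y (a i) - S - (y (a i) - y (b i))"
      using y[OF a_lt[OF i]] Lf_a[OF i] S_def by simp
    have xb: "x (b i) = int n * y (b i) - S - (y (b i) - y (a i))"
      using y[OF b_lt[OF i]] Lf_b[OF i] S_def by simp
    have "(int n - 1) * (x (b i) - x (ue (r-1))) - (x (a i) - x (ue (r-1))) = NN * (y (b i) - y (ue (r-1)))"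
      unfolding xa xb x0 NN_def by (simp add: algebra_simps)
    then show "NN dvd (int n - 1) * (x (b i) - x (ue (r-1))) - (x (a i) - x (ue (r-1)))" by simp
  qed
next
  assume R: ?R
  define x0 where "x0 = x (ue (r-1))"
  define pa where "pa i = (int n - 1) * (x (a i) - x0) - (x (b i) - x0)" for i
  define pb where "pb i = (int n - 1) * (x (b i) - x0) - (x (a i) - x0)" for i
  have dn: "j < r \<Longrightarrow> int n dvd x (ue j) - x0" for j using R x0_def by auto
  have db: "i < k \<Longrightarrow> NN dvd pb i" for i using R x0_def pb_def by auto
  have da: "i < k \<Longrightarrow> NN dvd pa i" for i
  proof -
    assume i: "i < k"
    have "pa i = NN * (x (b i) - x0) - (int n - 1) * pb i"
      unfolding pa_def pb_def NN_def by (simp add: algebra_simps)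
    then show ?thesis using db[OF i] by simp
  qed
  define y where "y v = (if v \<in> ue ` {..<r} then (x v - x0) div int n
      else if v \<in> a ` {..<k} then pa (the_inv_into {..<k} a v) div NN
      else pb (the_inv_into {..<k} b v) div NN)" for v
  have y_ue: "int n * y (ue j) = x (ue j) - x0" if j: "j < r" for j
    using dn[OF j] j by (simp add: y_def)
  have y_a: "NN * y (a i) = pa i" if i: "i < k" for i
  proof -
    have "a i \<notin> ue ` {..<r}" using a_ue i by auto
    then have "y (a i) = pa i div NN" using i a_inj by (simp add: y_def the_inv_into_f_f)
    then show ?thesis using da[OF i] by simp
  qed
  have y_b: "NN * y (b i) = pb i" if i: "i < k" for i
  proof -
    have "b i \<notin> ue ` {..<r}" using b_ue i by auto
    moreover have "b i \<notin> a ` {..<k}" using b_a i by auto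
    ultimately have "y (b i) = pb i div NN" using i b_inj by (simp add: y_def the_inv_into_f_f)
    then show ?thesis using db[OF i] by simp
  qed
  define S where "S = sum y {0..<n}"
  have Ly: "Lf y u = x u - x0 - S" if u: "u < n" for u
    using u
  proof (cases rule: V_cases)
    case (1 j) then show ?thesis using y_ue[of j] Lf_ue[of j y] S_def by simp
  next
    case (2 i)
    have "NN * ((int n - 1) * y (a i) + y (b i)) = (int n - 1) * (NN * y (a i)) + NN * y (b i)"
      by (simp add: algebra_simps)
    also have "\<dots> = (int n - 1) * pa i + pb i" using y_a[OF 2(1)] y_b[OF 2(1)] by simp
    also have "\<dots> = NN * (x (a i) - x0)" unfolding pa_def pb_def NN_def by (simp add: algebra_simps)
    finally have "NN * ((int n - 1) * y (a i) + y (b i)) = NN * (x (a i) - x0)" .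
    then have "(int n - 1) * y (a i) + y (b i) = x (a i) - x0" using NN_nz[OF 2(1)] by simp
    then show ?thesis using Lf_a[OF 2(1), where y=y] 2(2) S_def by (simp add: algebra_simps)
  next
    case (3 i)
    have "NN * ((int n - 1) * y (b i) + y (a i)) = (int n - 1) * (NN * y (b i)) + NN * y (a i)"
      by (simp add: algebra_simps)
    also have "\<dots> = (int n - 1) * pb i + pa i" using y_a[OF 3(1)] y_b[OF 3(1)] by simp
    also have "\<dots> = NN * (x (b i) - x0)" unfolding pa_def pb_def NN_def by (simp add: algebra_simps)
    finally have "NN * ((int n - 1) * y (b i) + y (a i)) = NN * (x (b i) - x0)" .
    then have "(int n - 1) * y (b i) + y (a i) = x (b i) - x0" using NN_nz[OF 3(1)] by simp
    then show ?thesis using Lf_b[OF 3(1), where y=y] 3(2) S_def by (simp add: algebra_simps)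
  qed
  have "sum (Lf y) {0..<n} = 0"
    unfolding Lf_def by (rule Lf_sum_zero) (auto intro: mm_sym)
  moreover have "sum (Lf y) {0..<n} = (\<Sum>u\<in>{0..<n}. x u - x0 - S)"
    using Ly by (intro sum.cong) auto
  moreover have "(\<Sum>u\<in>{0..<n}. x u - x0 - S) = - (int n * (x0 + S))"
    using sx by (simp add: sum_subtractf algebra_simps)
  ultimately have "int n * (x0 + S) = 0" by simp
  moreover have "n > 0" using nrk r1 by simp
  ultimately have "x0 + S = 0" by simp
  then have "\<forall>u\<in>{0..<n}. x u = Lf y u" using Ly by auto
  then show ?L by blast
qed

end


lemma cs_eq: "cyclic_sum d1 r1 d2 r2 = product_group {..<r1+r2} (\<lambda>i. integer_mod_group (if i < r1 then d1 else d2))"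
  unfolding cyclic_sum_def by (rule arg_cong[where f="product_group _"]) auto

lemma mod_carrier: "z mod int d \<in> carrier (integer_mod_group d)"
  by (simp add: carrier_integer_mod_group)

lemma cs_generic:
  fixes V :: "'a set" and F :: "nat \<Rightarrow> ('a \<Rightarrow> int) \<Rightarrow> int"
  assumes fin: "finite V" and sV: "s \<in> V" and sym: "\<And>u v. m u v = m v u"
    and congF: "\<And>t x x'. t < r1 + r2 \<Longrightarrow> (\<And>v. v \<in> V \<Longrightarrow> x v = x' v) \<Longrightarrow> F t x = F t x'"
    and addF: "\<And>t x x'. t < r1 + r2 \<Longrightarrow> F t (\<lambda>v. x v + x' v) = F t x + F t x'"
    and surjF: "\<And>h. \<exists>x. sum x V = 0 \<and> (\<forall>t < r1 + r2. F t x = h t)"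
    and kerF: "\<And>x. sum x V = 0 \<Longrightarrow> ((\<forall>t < r1 + r2. int (if t < r1 then d1 else d2) dvd F t x)
        \<longleftrightarrow> (\<exists>y. \<forall>u\<in>V. x u = (\<Sum>v\<in>V. laplacian V m u v * y v)))"
  shows "critical_group V m s \<cong> cyclic_sum d1 r1 d2 r2"
proof -
  define D where "D t = (if t < r1 then d1 else d2)" for t
  define H where "H = product_group {..<r1+r2} (\<lambda>i. integer_mod_group (D i))"
  define \<psi> where "\<psi> x = (\<lambda>t\<in>{..<r1+r2}. F t x mod int (D t))" for x
  have "critical_group V m s \<cong> H"
  proof (rule crit_iso_generic[OF fin sV sym])
    show "group H" unfolding H_def by simp
    show "\<psi> x = \<psi> x'" if "\<And>v. v \<in> V \<Longrightarrow> x v = x' v" for x x'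
      unfolding \<psi>_def by (rule restrict_ext) (simp add: congF[OF _ that])
    show "\<psi> x \<in> carrier H" for x
      unfolding \<psi>_def H_def by (simp add: mod_carrier)
    show "\<psi> (\<lambda>v. x v + x' v) = \<psi> x \<otimes>\<^bsub>H\<^esub> \<psi> x'" for x x'
      unfolding \<psi>_def H_def by (simp, rule restrict_ext) (simp add: addF mod_add_eq)
    show "\<exists>x. sum x V = 0 \<and> \<psi> x = h" if h: "h \<in> carrier H" for h
    proof -
      obtain x where x: "sum x V = 0" "\<forall>t < r1 + r2. F t x = h t" using surjF by blast
      have "\<psi> x = h"
      proof (rule extensionalityI[where A="{..<r1+r2}"])
        show "\<psi> x \<in> extensional {..<r1+r2}" unfolding \<psi>_def by simp
        show "h \<in> extensional {..<r1+r2}" using h unfolding H_def by (simp add: PiE_def)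
        fix t assume t: "t \<in> {..<r1+r2}"
        have "h t \<in> carrier (integer_mod_group (D t))" using h t unfolding H_def by auto
        then have "h t mod int (D t) = h t"
          by (cases "D t = 0") (auto simp: carrier_integer_mod_group)
        then show "\<psi> x t = h t" using x t by (simp add: \<psi>_def)
      qed
      then show ?thesis using x by blast
    qed
    show "(\<psi> x = \<one>\<^bsub>H\<^esub>) = (\<exists>y. \<forall>u\<in>V. x u = (\<Sum>v\<in>V. laplacian V m u v * y v))"
      if sx: "sum x V = 0" for x
    proof -
      have "(\<psi> x = \<one>\<^bsub>H\<^esub>) \<longleftrightarrow> (\<forall>t < r1 + r2. int (D t) dvd F t x)"
      proof
        assume "\<psi> x = \<one>\<^bsub>H\<^esub>"
        then have "\<forall>t\<in>{..<r1+r2}. \<psi> x t = \<one>\<^bsub>H\<^esub> t" by simp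
        then show "\<forall>t < r1 + r2. int (D t) dvd F t x"
          unfolding \<psi>_def H_def by (auto simp: mod_eq_0_iff_dvd)
      next
        assume "\<forall>t < r1 + r2. int (D t) dvd F t x"
        then show "\<psi> x = \<one>\<^bsub>H\<^esub>"
          unfolding \<psi>_def H_def by (simp, intro restrict_ext) (simp add: mod_eq_0_iff_dvd)
      qed
      then show ?thesis using kerF[OF sx] D_def by simp
    qed
  qed
  then show ?thesis unfolding H_def D_def cs_eq .
qed



context KM begin

lemma sum_delta_ue: "t < R \<Longrightarrow> R \<le> r \<Longrightarrow> (\<Sum>j<R. if ue t = ue j then h j else 0) = (h t :: int)"
proof -
  assume t: "t < R" and R: "R \<le> r"
  have "(\<Sum>j<R. if ue t = ue j then h j else 0) = (\<Sum>j<R. if t = j then h j else 0)"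
    using t R ue_eq by (intro sum.cong) auto
  then show ?thesis using t by simp
qed

lemma sum_zero_ue: "(\<And>j. j < R \<Longrightarrow> v \<noteq> ue j) \<Longrightarrow> (\<Sum>j<R. if v = ue j then h j else 0) = (0::int)"
  by (intro sum.neutral) auto

lemma sum_delta_a: "t < k \<Longrightarrow> (\<Sum>j<k. if a t = a j then h j else 0) = (h t :: int)"
proof -
  assume t: "t < k"
  have "(\<Sum>j<k. if a t = a j then h j else 0) = (\<Sum>j<k. if t = j then h j else 0)"
    using t a_eq by (intro sum.cong) auto
  then show ?thesis using t by simp
qed

lemma sum_zero_a: "(\<And>j. j < k \<Longrightarrow> v \<noteq> a j) \<Longrightarrow> (\<Sum>j<k. if v = a j then h j else 0) = (0::int)"
  by (intro sum.neutral) auto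

lemma sum_ind: "c < n \<Longrightarrow> (\<Sum>v\<in>{0..<n}. if v = c then z else 0) = (z::int)"
  by (simp add: sum.delta')

lemma case1:
  assumes r2: "r \<ge> 2" and s: "s < n"
  shows "critical_group {0..<n} mm s \<cong> cyclic_sum n (r - 2) (n * (n - 2)) k"
proof -
  define F where "F t x = (if t < r - 2 then x (ue t) - x (ue (r-2))
     else x (a (t - (r-2))) - (int n - 1) * x (b (t - (r-2))) + (int n - 2) * x (ue (r-2)))" for t and x :: "nat \<Rightarrow> int"
  have n2: "n \<ge> 2" using nrk r2 by simp
  have NNe: "int (n * (n - 2)) = NN" unfolding NN_def using n2 by (simp add: of_nat_diff)
  show ?thesis
  proof (rule cs_generic[where F=F])
    show "finite {0..<n}" by simp
    show "s \<in> {0..<n}" using s by simp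
    show "mm u v = mm v u" for u v by (rule mm_sym)
    show "F t x = F t x'" if t: "t < r - 2 + k" and xx: "\<And>v. v \<in> {0..<n} \<Longrightarrow> x v = x' v" for t x x'
    proof -
      have "r - 2 < r" using r2 by simp
      then show ?thesis using t xx ue_lt a_lt b_lt unfolding F_def by auto
    qed
    show "F t (\<lambda>v. x v + x' v) = F t x + F t x'" for t x x'
      unfolding F_def by (simp add: algebra_simps)
    show "\<exists>x. sum x {0..<n} = 0 \<and> (\<forall>t<r - 2 + k. F t x = h t)" for h
    proof -
      define T where "T = (\<Sum>j<r-2. h j) + (\<Sum>i<k. h (r - 2 + i))"
      define x where "x v = (\<Sum>j<r-2. if v = ue j then h j else 0) + (\<Sum>i<k. if v = a i then h (r - 2 + i) else 0)
          + (if v = ue (r-1) then - T else 0)" for v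
      have r1': "r - 1 < r" using r2 by simp
      have "sum x {0..<n} = (\<Sum>j<r-2. \<Sum>v\<in>{0..<n}. if v = ue j then h j else 0)
          + (\<Sum>i<k. \<Sum>v\<in>{0..<n}. if v = a i then h (r - 2 + i) else 0) + (\<Sum>v\<in>{0..<n}. if v = ue (r-1) then - T else 0)"
        unfolding x_def sum.distrib
        by (simp only: sum.swap[of "\<lambda>v j. if v = ue j then h j else 0"]
              sum.swap[of "\<lambda>v i. if v = a i then h (r - 2 + i) else 0"])
      also have "\<dots> = 0"
        using ue_lt a_lt r1' by (simp add: sum_ind T_def)
      finally have sx: "sum x {0..<n} = 0" .
      have xue: "x (ue t) = h t" if "t < r - 2" for t
      proof -
        have "(\<Sum>i<k. if ue t = a i then h (r - 2 + i) else 0) = 0" using ue_a that by (intro sum_zero_a) auto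
        moreover have "ue t \<noteq> ue (r-1)" using that ue_eq r2 by simp
        ultimately show ?thesis using that sum_delta_ue[of t "r-2" h] by (simp add: x_def)
      qed
      have xl: "x (ue (r-2)) = 0"
      proof -
        have "(\<Sum>j<r-2. if ue (r-2) = ue j then h j else 0) = 0" using ue_eq r2 by (intro sum_zero_ue) auto
        moreover have "(\<Sum>i<k. if ue (r-2) = a i then h (r - 2 + i) else 0) = 0" using ue_a r2 by (intro sum_zero_a) auto
        moreover have "ue (r-2) \<noteq> ue (r-1)" using ue_eq r2 by simp
        ultimately show ?thesis by (simp add: x_def)
      qed
      have xa: "x (a i) = h (r - 2 + i)" if i: "i < k" for i
      proof -
        have "(\<Sum>j<r-2. if a i = ue j then h j else 0) = 0" using a_ue i by (intro sum_zero_ue) auto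
        moreover have "a i \<noteq> ue (r-1)" using a_ue[OF r1' i] .
        ultimately show ?thesis using i sum_delta_a[of i "\<lambda>i. h (r - 2 + i)"] by (simp add: x_def)
      qed
      have xb: "x (b i) = 0" if i: "i < k" for i
      proof -
        have "(\<Sum>j<r-2. if b i = ue j then h j else 0) = 0" using b_ue i by (intro sum_zero_ue) auto
        moreover have "(\<Sum>j<k. if b i = a j then h (r - 2 + j) else 0) = 0" using b_a i by (intro sum_zero_a) auto
        moreover have "b i \<noteq> ue (r-1)" using b_ue[OF r1' i] .
        ultimately show ?thesis by (simp add: x_def)
      qed
      have "\<forall>t<r - 2 + k. F t x = h t"
        using xue xl xa xb by (auto simp: F_def)
      then show ?thesis using sx by blast
    qed
    show "(\<forall>t<r - 2 + k. int (if t < r - 2 then n else n * (n - 2)) dvd F t x) =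
          (\<exists>y. \<forall>u\<in>{0..<n}. x u = (\<Sum>v\<in>{0..<n}. laplacian {0..<n} mm u v * y v))"
      if sx: "sum x {0..<n} = 0" for x
    proof -
      define xl where "xl = x (ue (r-2))"
      define x0 where "x0 = x (ue (r-1))"
      define G where "G i = x (a i) - (int n - 1) * x (b i) + (int n - 2) * xl" for i
      have "(\<forall>t<r - 2 + k. int (if t < r - 2 then n else n * (n - 2)) dvd F t x) \<longleftrightarrow>
            (\<forall>j<r-2. int n dvd x (ue j) - xl) \<and> (\<forall>i<k. NN dvd G i)"
      proof
        assume A: "\<forall>t<r - 2 + k. int (if t < r - 2 then n else n * (n - 2)) dvd F t x"
        show "(\<forall>j<r-2. int n dvd x (ue j) - xl) \<and> (\<forall>i<k. NN dvd G i)"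
        proof (intro conjI allI impI)
          fix j assume "j < r - 2" then show "int n dvd x (ue j) - xl"
            using A[rule_format, of j] by (simp add: F_def xl_def)
        next
          fix i assume "i < k" then show "NN dvd G i"
            using A[rule_format, of "r - 2 + i"] NNe by (simp add: F_def G_def xl_def)
        qed
      next
        assume B: "(\<forall>j<r-2. int n dvd x (ue j) - xl) \<and> (\<forall>i<k. NN dvd G i)"
        show "\<forall>t<r - 2 + k. int (if t < r - 2 then n else n * (n - 2)) dvd F t x"
        proof (intro allI impI)
          fix t assume t: "t < r - 2 + k"
          show "int (if t < r - 2 then n else n * (n - 2)) dvd F t x"
          proof (cases "t < r - 2")
            case True then show ?thesis using B by (simp add: F_def xl_def)
          next
            case False
            then have "t - (r-2) < k" using t by simp
            then show ?thesis using B False NNe by (simp add: F_def G_def xl_def)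
          qed
        qed
      qed
      also have "\<dots> \<longleftrightarrow> ((\<forall>j<r. int n dvd x (ue j) - x0) \<and>
         (\<forall>i<k. NN dvd (int n - 1) * (x (b i) - x0) - (x (a i) - x0)))"
      proof
        assume B: "(\<forall>j<r-2. int n dvd x (ue j) - xl) \<and> (\<forall>i<k. NN dvd G i)"
        have nNN: "int n dvd NN" by (simp add: NN_def)
        have Ga: "int n dvd x (a i) + x (b i) - 2 * xl" if i: "i < k" for i
        proof -
          have "int n dvd G i" using B i nNN dvd_trans by blast
          moreover have "x (a i) + x (b i) - 2 * xl = G i + int n * (x (b i) - xl)"
            by (simp add: G_def algebra_simps)
          ultimately show ?thesis by simp
        qed
        define D1 where "D1 = (\<Sum>j<r-2. x (ue j) - xl) + (\<Sum>i<k. x (a i) + x (b i) - 2 * xl)"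
        have D1d: "int n dvd D1" unfolding D1_def using B Ga
          by (intro dvd_add dvd_sum) auto
        have su: "(\<Sum>j<r. x (ue j)) = (\<Sum>j<r-2. x (ue j)) + xl + x0"
        proof -
          obtain r' where rr: "r = Suc (Suc r')" using r2 by (metis add_2_eq_Suc le_Suc_ex)
          show ?thesis unfolding xl_def x0_def rr by simp
        qed
        have "0 = (\<Sum>j<r. x (ue j)) + (\<Sum>i<k. x (a i)) + (\<Sum>i<k. x (b i))"
          using sx sum_V[of x] by simp
        also have "\<dots> = D1 + (x0 - xl) + int n * xl"
          unfolding su D1_def using nrk r2
          by (simp add: sum_subtractf sum.distrib algebra_simps of_nat_diff)
        finally have eq0: "0 = D1 + (x0 - xl) + int n * xl" .
        then have "xl - x0 = D1 + int n * xl" by linarith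
        moreover have "int n dvd D1 + int n * xl" using D1d by (intro dvd_add) auto
        ultimately have d0: "int n dvd xl - x0" by simp
        show "(\<forall>j<r. int n dvd x (ue j) - x0) \<and>
            (\<forall>i<k. NN dvd (int n - 1) * (x (b i) - x0) - (x (a i) - x0))"
        proof (intro conjI allI impI)
          fix j assume j: "j < r"
          consider "j < r - 2" | "j = r - 2" | "j = r - 1" using j by linarith
          then show "int n dvd x (ue j) - x0"
          proof cases
            case 1
            have "int n dvd (x (ue j) - xl) + (xl - x0)" using 1 B d0 by (intro dvd_add) auto
            then show ?thesis by simp
          next
            case 2 then show ?thesis using d0 xl_def by simp
          next
            case 3 then show ?thesis using x0_def by simp
          qed
        next
          fix i assume i: "i < k"
          have "(int n - 1) * (x (b i) - x0) - (x (a i) - x0) = - G i + (int n - 2) * (xl - x0)"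
            by (simp add: G_def algebra_simps)
          moreover have "NN dvd (int n - 2) * (xl - x0)" 
          proof -
            obtain c where "xl - x0 = int n * c" using d0 by (auto elim: dvdE)
            then have "(int n - 2) * (xl - x0) = NN * c" unfolding NN_def by (simp add: algebra_simps)
            then show ?thesis by simp
          qed
          ultimately show "NN dvd (int n - 1) * (x (b i) - x0) - (x (a i) - x0)"
            using B i by simp
        qed
      next
        assume C: "(\<forall>j<r. int n dvd x (ue j) - x0) \<and>
          (\<forall>i<k. NN dvd (int n - 1) * (x (b i) - x0) - (x (a i) - x0))"
        have d0: "int n dvd xl - x0" using C r2 xl_def by auto
        show "(\<forall>j<r-2. int n dvd x (ue j) - xl) \<and> (\<forall>i<k. NN dvd G i)"
        proof (intro conjI allI impI)
          fix j assume j: "j < r - 2"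
          have "x (ue j) - xl = (x (ue j) - x0) - (xl - x0)" by simp
          moreover have "int n dvd x (ue j) - x0" using C j by auto
          ultimately show "int n dvd x (ue j) - xl" using d0 by (metis dvd_diff)
        next
          fix i assume i: "i < k"
          have "G i = - ((int n - 1) * (x (b i) - x0) - (x (a i) - x0)) + (int n - 2) * (xl - x0)"
            by (simp add: G_def algebra_simps)
          moreover have "NN dvd (int n - 2) * (xl - x0)" 
          proof -
            obtain c where "xl - x0 = int n * c" using d0 by (auto elim: dvdE)
            then have "(int n - 2) * (xl - x0) = NN * c" unfolding NN_def by (simp add: algebra_simps)
            then show ?thesis by simp
          qed
          moreover have "NN dvd (int n - 1) * (x (b i) - x0) - (x (a i) - x0)" using C i by auto
          ultimately show "NN dvd G i" by (metis dvd_add dvd_minus_iff)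
        qed
      qed
      also have "\<dots> \<longleftrightarrow> (\<exists>y. \<forall>u\<in>{0..<n}. x u = Lf y u)"
        using ker_char[OF sx] x0_def by simp
      finally show ?thesis unfolding Lf_def .
    qed
  qed
qed

end


context KM begin

lemma case2:
  assumes r1': "r = 1" and k1: "k \<ge> 1" and s: "s < n"
  shows "critical_group {0..<n} mm s \<cong> cyclic_sum (n - 2) 1 (n * (n - 2)) (k - 1)"
proof -
  define f where "f i x = x (a i) - (int n - 1) * x (b i)" for i and x :: "nat \<Rightarrow> int"
  define F where "F t x = (if t < 1 then f 0 x else f t x - f 0 x)" for t and x :: "nat \<Rightarrow> int"
  have n3: "n \<ge> 3" using nrk r1' k1 by simp
  have NNe: "int (n * (n - 2)) = NN" unfolding NN_def using n3 by (simp add: of_nat_diff)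
  have n2e: "int (n - 2) = int n - 2" using n3 by (simp add: of_nat_diff)
  have Rk: "1 + (k - 1) = k" using k1 by simp
  have k0: "0 < k" using k1 by simp
  show ?thesis
  proof (rule cs_generic[where F=F])
    show "finite {0..<n}" by simp
    show "s \<in> {0..<n}" using s by simp
    show "mm u v = mm v u" for u v by (rule mm_sym)
    show "F t x = F t x'" if t: "t < 1 + (k - 1)" and xx: "\<And>v. v \<in> {0..<n} \<Longrightarrow> x v = x' v" for t x x'
    proof -
      have "t < k" using t Rk by simp
      then show ?thesis using k0 xx a_lt b_lt unfolding F_def f_def by auto
    qed
    show "F t (\<lambda>v. x v + x' v) = F t x + F t x'" for t x x'
      unfolding F_def f_def by (simp add: algebra_simps)
    show "\<exists>x. sum x {0..<n} = 0 \<and> (\<forall>t<1 + (k - 1). F t x = h t)" for h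
    proof -
      define g where "g i = (if i = 0 then h 0 else h i + h 0)" for i
      define x where "x v = (\<Sum>i<k. if v = a i then g i else 0) + (if v = ue 0 then - (\<Sum>i<k. g i) else 0)" for v
      have u0: "0 < r" using r1' by simp
      have "sum x {0..<n} = (\<Sum>i<k. \<Sum>v\<in>{0..<n}. if v = a i then g i else 0)
           + (\<Sum>v\<in>{0..<n}. if v = ue 0 then - (\<Sum>i<k. g i) else 0)"
        unfolding x_def sum.distrib
        by (simp only: sum.swap[of "\<lambda>v i. if v = a i then g i else 0"])
      also have "\<dots> = 0" using a_lt ue_lt[OF u0] by (simp add: sum_ind)
      finally have sx: "sum x {0..<n} = 0" .
      have xa: "x (a i) = g i" if i: "i < k" for i
        using i sum_delta_a[of i g] a_ue[OF u0 i] by (simp add: x_def)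
      have xb: "x (b i) = 0" if i: "i < k" for i
      proof -
        have "(\<Sum>j<k. if b i = a j then g j else 0) = 0" using b_a i by (intro sum_zero_a) auto
        then show ?thesis using b_ue[OF u0 i] by (simp add: x_def)
      qed
      have "\<forall>t<1 + (k - 1). F t x = h t"
      proof (intro allI impI)
        fix t assume "t < 1 + (k - 1)"
        then have t: "t < k" using Rk by simp
        show "F t x = h t" using xa[OF t] xb[OF t] xa[OF k0] xb[OF k0]
          by (simp add: F_def f_def g_def)
      qed
      then show ?thesis using sx by blast
    qed
    show "(\<forall>t<1 + (k - 1). int (if t < 1 then n - 2 else n * (n - 2)) dvd F t x) =
          (\<exists>y. \<forall>u\<in>{0..<n}. x u = (\<Sum>v\<in>{0..<n}. laplacian {0..<n} mm u v * y v))"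
      if sx: "sum x {0..<n} = 0" for x
    proof -
      define x0 where "x0 = x (ue 0)"
      define E where "E i = (int n - 1) * (x (b i) - x0) - (x (a i) - x0)" for i
      have Ef: "E i = - f i x - (int n - 2) * x0" for i
        unfolding E_def f_def by (simp add: algebra_simps)
      have nNN: "int n dvd NN" by (simp add: NN_def)
      have n2NN: "(int n - 2) dvd NN" by (simp add: NN_def)
      have "(\<forall>t<1 + (k - 1). int (if t < 1 then n - 2 else n * (n - 2)) dvd F t x) \<longleftrightarrow>
            ((int n - 2) dvd f 0 x \<and> (\<forall>t<k. NN dvd f t x - f 0 x))"
      proof
        assume A: "\<forall>t<1 + (k - 1). int (if t < 1 then n - 2 else n * (n - 2)) dvd F t x"
        show "(int n - 2) dvd f 0 x \<and> (\<forall>t<k. NN dvd f t x - f 0 x)"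
        proof (intro conjI allI impI)
          show "(int n - 2) dvd f 0 x" using A[rule_format, of 0] n2e by (simp add: F_def)
        next
          fix t assume t: "t < k"
          show "NN dvd f t x - f 0 x"
          proof (cases "t = 0")
            case True then show ?thesis by simp
          next
            case False then show ?thesis using A[rule_format, of t] t Rk NNe by (simp add: F_def)
          qed
        qed
      next
        assume B: "(int n - 2) dvd f 0 x \<and> (\<forall>t<k. NN dvd f t x - f 0 x)"
        show "\<forall>t<1 + (k - 1). int (if t < 1 then n - 2 else n * (n - 2)) dvd F t x"
          using B Rk NNe n2e by (auto simp: F_def)
      qed
      also have "\<dots> \<longleftrightarrow> ((\<forall>j<r. int n dvd x (ue j) - x (ue (r-1))) \<and>
         (\<forall>i<k. NN dvd (int n - 1) * (x (b i) - x (ue (r-1))) - (x (a i) - x (ue (r-1)))))"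
      proof -
        have triv: "(\<forall>j<r. int n dvd x (ue j) - x (ue (r-1))) = True" using r1' by simp
        have "((int n - 2) dvd f 0 x \<and> (\<forall>t<k. NN dvd f t x - f 0 x)) \<longleftrightarrow> (\<forall>i<k. NN dvd E i)"
        proof
          assume B: "(int n - 2) dvd f 0 x \<and> (\<forall>t<k. NN dvd f t x - f 0 x)"
          then obtain mq where mq: "f 0 x = (int n - 2) * mq" by (auto elim: dvdE)
          have dn: "int n dvd f i x - f 0 x" if "i < k" for i using B that nNN dvd_trans by blast
          have s0: "x0 + (\<Sum>i<k. x (a i)) + (\<Sum>i<k. x (b i)) = 0"
            using sx sum_V[of x] r1' x0_def by simp
          have sf: "(\<Sum>i<k. f i x) = - x0 - int n * (\<Sum>i<k. x (b i))"
          proof -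
            have "(\<Sum>i<k. f i x) = (\<Sum>i<k. x (a i)) - (int n - 1) * (\<Sum>i<k. x (b i))"
              unfolding f_def by (simp add: sum_subtractf sum_distrib_left)
            then show ?thesis using s0 by (simp add: algebra_simps)
          qed
          have "(\<Sum>i<k. f i x) = int k * f 0 x + (\<Sum>i<k. f i x - f 0 x)"
            by (simp add: sum_subtractf)
          then have "int k * f 0 x + x0 = - int n * (\<Sum>i<k. x (b i)) - (\<Sum>i<k. f i x - f 0 x)"
            using sf by simp
          moreover have "int n dvd - int n * (\<Sum>i<k. x (b i)) - (\<Sum>i<k. f i x - f 0 x)"
          proof -
            have ds: "int n dvd (\<Sum>i<k. f i x - f 0 x)" using dn by (intro dvd_sum) auto
            have "int n dvd - int n * (\<Sum>i<k. x (b i))" by simp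
            then show ?thesis using ds by (rule dvd_diff)
          qed
          ultimately have d1: "int n dvd int k * f 0 x + x0" by simp
          have "int k * f 0 x + x0 = int n * ((int k - 1) * mq) + (mq + x0)"
            unfolding mq using nrk r1' by (simp add: algebra_simps)
          with d1 have "int n dvd mq + x0" by (metis dvd_add_right_iff dvd_triv_left)
          then obtain c where c: "mq + x0 = int n * c" by (auto elim: dvdE)
          have d2: "NN dvd f 0 x + (int n - 2) * x0"
          proof -
            have "f 0 x + (int n - 2) * x0 = (int n - 2) * (mq + x0)" unfolding mq by (simp add: algebra_simps)
            also have "\<dots> = NN * c" unfolding c NN_def by (simp add: algebra_simps)
            finally show ?thesis by simp
          qed
          show "\<forall>i<k. NN dvd E i"
          proof (intro allI impI)
            fix i assume i: "i < k"
            have "E i = - (f i x - f 0 x) - (f 0 x + (int n - 2) * x0)" unfolding Ef by simp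
            moreover have "NN dvd - (f i x - f 0 x) - (f 0 x + (int n - 2) * x0)"
            proof -
              have "NN dvd - (f i x - f 0 x)" using B i by (simp only: dvd_minus_iff)
              then show ?thesis using d2 by (rule dvd_diff)
            qed
            ultimately show "NN dvd E i" by simp
          qed
        next
          assume C: "\<forall>i<k. NN dvd E i"
          show "(int n - 2) dvd f 0 x \<and> (\<forall>t<k. NN dvd f t x - f 0 x)"
          proof (intro conjI allI impI)
            have "f 0 x = - E 0 - (int n - 2) * x0" unfolding Ef by simp
            moreover have "(int n - 2) dvd - E 0 - (int n - 2) * x0"
            proof -
              have "NN dvd E 0" using C k0 by simp
              then have "(int n - 2) dvd E 0" using n2NN by (rule dvd_trans[rotated])
              then have "(int n - 2) dvd - E 0" by simp
              moreover have "(int n - 2) dvd (int n - 2) * x0" by simp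
              ultimately show ?thesis by (rule dvd_diff)
            qed
            ultimately show "(int n - 2) dvd f 0 x" by simp
          next
            fix t assume t: "t < k"
            have "f t x - f 0 x = E 0 - E t" unfolding Ef by simp
            then show "NN dvd f t x - f 0 x" using C t k0 by simp
          qed
        qed
        then show ?thesis unfolding triv E_def x0_def using r1' by simp
      qed
      also have "\<dots> \<longleftrightarrow> (\<exists>y. \<forall>u\<in>{0..<n}. x u = Lf y u)"
        using ker_char[OF sx] by simp
      finally show ?thesis unfolding Lf_def .
    qed
  qed
qed

end


lemma card2_minmax:
  assumes "card (e::nat set) = 2"
  shows "e = {Min e, Max e} \<and> Min e < Max e"
proof -
  from card_2_iff[THEN iffD1, OF assms] obtain x y where xy: "e = {x, y}" "x \<noteq> y" by blast
  show ?thesis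
  proof (cases "x < y")
    case True
    then have "Min e = x" "Max e = y" unfolding xy(1) by simp_all
    then show ?thesis using True xy(1) by simp
  next
    case False then have yx: "y < x" using xy by simp
    then have "Min e = y" "Max e = x" unfolding xy(1) by simp_all
    then show ?thesis using yx xy(1) by auto
  qed
qed

theorem proposition5p2:
  fixes n k s :: nat and M :: "nat set set"
  assumes "is_matching n M" and "card M = k" and "s < n"
  shows "(2 * k + 2 \<le> n \<longrightarrow>
            critical_group {0..<n} (complete_minus_matching M) s
              \<cong> cyclic_sum n (n - 2 * k - 2) (n * (n - 2)) k)
       \<and> (n = 2 * k + 1 \<and> k \<ge> 1 \<longrightarrow>
            critical_group {0..<n} (complete_minus_matching M) s
              \<cong> cyclic_sum (n - 2) 1 (n * (n - 2)) (k - 1))"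
proof -
  have Msub: "\<And>e. e \<in> M \<Longrightarrow> e \<subseteq> {0..<n} \<and> card e = 2" using assms(1) by (simp add: is_matching_def)
  have Mdisj: "\<And>e f. e \<in> M \<Longrightarrow> f \<in> M \<Longrightarrow> e \<noteq> f \<Longrightarrow> e \<inter> f = {}"
    using assms(1) by (simp add: is_matching_def)
  have finM: "finite M"
  proof (rule finite_subset)
    show "M \<subseteq> Pow {0..<n}" using Msub by auto
  qed simp
  obtain pe where pe: "bij_betw pe {0..<k} M" using ex_bij_betw_nat_finite[OF finM] assms(2) by blast
  have peM: "i < k \<Longrightarrow> pe i \<in> M" for i using pe by (auto simp: bij_betw_def)
  have pe_inj: "i < k \<Longrightarrow> i' < k \<Longrightarrow> pe i = pe i' \<Longrightarrow> i = i'" for i i'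
    using pe by (auto simp: bij_betw_def dest: inj_onD)
  define a where "a i = Min (pe i)" for i
  define b where "b i = Max (pe i)" for i
  have peab: "i < k \<Longrightarrow> pe i = {a i, b i} \<and> a i < b i" for i
    using card2_minmax[of "pe i"] Msub[OF peM] a_def b_def by simp
  have pe_disj: "i < k \<Longrightarrow> i' < k \<Longrightarrow> i \<noteq> i' \<Longrightarrow> pe i \<inter> pe i' = {}" for i i'
  proof -
    assume i: "i < k" and i': "i' < k" and ne: "i \<noteq> i'"
    have "pe i \<noteq> pe i'" using pe_inj[OF i i'] ne by blast
    then show ?thesis using Mdisj[OF peM[OF i] peM[OF i']] by blast
  qed
  define W where "W = \<Union>M"
  define U where "U = {0..<n} - W"
  define r where "r = card U"
  have WV: "W \<subseteq> {0..<n}" using Msub W_def by auto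
  have cW: "card W = 2 * k"
  proof -
    have finE: "A \<in> M \<Longrightarrow> finite A" for A using Msub[of A] finite_subset by blast
    have pw: "pairwise disjnt M" using Mdisj by (auto simp: pairwise_def disjnt_def)
    have "card W = sum card M" unfolding W_def
      by (rule card_Union_disjoint[OF pw finE])
    also have "\<dots> = sum (\<lambda>_. 2) M" using Msub by (intro sum.cong) auto
    finally show ?thesis using assms(2) by simp
  qed
  have rn: "r = n - 2 * k" and kn: "2 * k \<le> n"
  proof -
    have "card U = card {0..<n} - card W" unfolding U_def using WV by (simp add: card_Diff_subset finite_subset)
    then show "r = n - 2 * k" using cW r_def by simp
    show "2 * k \<le> n" using card_mono[OF _ WV] cW by simp
  qed
  obtain ue where ue: "bij_betw ue {0..<r} U" using ex_bij_betw_nat_finite[of U] r_def U_def by auto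
  have ueU: "j < r \<Longrightarrow> ue j \<in> U" for j using ue by (auto simp: bij_betw_def)
  have aW: "i < k \<Longrightarrow> a i \<in> W" for i
  proof -
    assume i: "i < k"
    have "a i \<in> pe i" using peab[OF i] by simp
    then show ?thesis using peM[OF i] unfolding W_def by blast
  qed
  have bW: "i < k \<Longrightarrow> b i \<in> W" for i
  proof -
    assume i: "i < k"
    have "b i \<in> pe i" using peab[OF i] by simp
    then show ?thesis using peM[OF i] unfolding W_def by blast
  qed
  have KMI: "KM n k r ue a b" if r1: "1 \<le> r"
  proof
    show "n = r + 2 * k" using rn kn by simp
    show "1 \<le> r" by (rule r1)
    show "inj_on ue {..<r}" using ue by (simp add: bij_betw_def atLeast0LessThan)
    show "inj_on a {..<k}"
    proof (rule inj_onI)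
      fix i i' assume i: "i \<in> {..<k}" and i': "i' \<in> {..<k}" and e: "a i = a i'"
      show "i = i'"
      proof (rule ccontr)
        assume "i \<noteq> i'"
        then have "pe i \<inter> pe i' = {}" using pe_disj i i' by simp
        moreover have "a i \<in> pe i" "a i \<in> pe i'" using peab i i' e by auto
        ultimately show False by blast
      qed
    qed
    show "inj_on b {..<k}"
    proof (rule inj_onI)
      fix i i' assume i: "i \<in> {..<k}" and i': "i' \<in> {..<k}" and e: "b i = b i'"
      show "i = i'"
      proof (rule ccontr)
        assume "i \<noteq> i'"
        then have "pe i \<inter> pe i' = {}" using pe_disj i i' by simp
        moreover have "b i \<in> pe i" "b i \<in> pe i'" using peab i i' e by auto
        ultimately show False by blast
      qed
    qed
    show "ue j < n" if "j < r" for j using ueU[OF that] U_def by auto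
    show "a i < n" if "i < k" for i using aW[OF that] WV by auto
    show "b i < n" if "i < k" for i using bW[OF that] WV by auto
    show "ue j \<noteq> a i" if "j < r" "i < k" for j i using ueU[OF that(1)] aW[OF that(2)] U_def by auto
    show "ue j \<noteq> b i" if "j < r" "i < k" for j i using ueU[OF that(1)] bW[OF that(2)] U_def by auto
    show "a i \<noteq> b i'" if i: "i < k" and i': "i' < k" for i i'
    proof (cases "i = i'")
      case True then show ?thesis using peab[OF i] by simp
    next
      case False then show ?thesis using pe_disj[OF i i' False] peab[OF i] peab[OF i'] by auto
    qed
  qed
  have Meq: "(\<lambda>i. {a i, b i}) ` {..<k} = M"
  proof -
    have "(\<lambda>i. {a i, b i}) ` {..<k} = pe ` {..<k}" using peab by (intro image_cong) auto
    also have "\<dots> = M" using pe by (simp add: bij_betw_def atLeast0LessThan)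
    finally show ?thesis .
  qed
  show ?thesis
  proof (intro conjI impI)
    assume h: "2 * k + 2 \<le> n"
    then have r2: "r \<ge> 2" using rn by simp
    interpret KM n k r ue a b using KMI r2 by simp
    have mmeq: "mm = complete_minus_matching M" unfolding mm_def Ms_def Meq ..
    have req: "r - 2 = n - 2 * k - 2" using rn by simp
    show "critical_group {0..<n} (complete_minus_matching M) s
              \<cong> cyclic_sum n (n - 2 * k - 2) (n * (n - 2)) k"
      using case1[OF r2 assms(3), unfolded mmeq req] .
  next
    assume h: "n = 2 * k + 1 \<and> k \<ge> 1"
    then have rr1: "r = 1" using rn by simp
    interpret KM n k r ue a b using KMI rr1 by simp
    have mmeq: "mm = complete_minus_matching M" unfolding mm_def Ms_def Meq ..
    have k1: "k \<ge> 1" using h by simp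
    show "critical_group {0..<n} (complete_minus_matching M) s
              \<cong> cyclic_sum (n - 2) 1 (n * (n - 2)) (k - 1)"
      using case2[OF rr1 k1 assms(3), unfolded mmeq] .
  qed
qed


end
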